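(* Let $T>0$, $C_1>0$, and let $H:(0,1)^n\times\mathbb S(n)\to\mathbb R^n$, $B:(0,1)^n\times\mathbb S(n)\to\mathbb S(n)$ be $C^1$ with $(B(\mu,p),p)\ge(H(\mu,p),\mu)-C_1$ and $H_i(\mu,p)\ge-C_1$ for all $(\mu,p)\in(0,1)^n\times\mathbb S(n)$ and all $i$; let $g:[0,1]^n\to\mathbb R^n$. Let $\lambda\in[0,1]$, $t\in[0,T)$, $\mu\in\mathcal P_0(\mathbb G)$, and let $(\phi,\rho):[t,T]\to\mathbb R^n\times(0,1)^n$ be a classical solution of $$\dot\phi=H(\rho,\lambda\nabla_{\mathbb G}\phi)-\Delta_{\mathbb G}\phi,\quad\dot\rho=\nabla_{\mathbb G}\cdot B(\rho,\lambda\nabla_{\mathbb G}\phi)+\Delta_{\mathbb G}\rho\ \text{ on }(t,T),\quad\phi(T)=g(\rho(T)),\ \rho(t)=\mu.$$ Then $\lambda(\phi(T),\rho(T))\le\lambda(\phi(t),\mu)+2C_1(T-t)$.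
   Context: $\mathbb G$: finite connected simple undirected graph on $\{1,\dots,n\}$ with symmetric edge weights $\omega_{ij}>0$ iff $(i,j)\in\mathbb E$. $\mathbb S(n)$: skew-symmetric matrices with $(m,\tilde m)=\frac12\sum_{(i,j)\in\mathbb E}m^{ij}\tilde m^{ij}$; $(\cdot,\cdot)$ on $\mathbb R^n$ is Euclidean. $(\nabla_{\mathbb G}u)^{ij}=\sqrt{\omega_{ij}}(u^i-u^j)$, $(\nabla_{\mathbb G}\cdot m)^i=\sum_{j\ne i}\sqrt{\omega_{ij}}m^{ji}$, $(\Delta_{\mathbb G}u)^i=\sum_j\omega_{ij}(u^j-u^i)$. $\mathcal P_0(\mathbb G)$: probability vectors with positive entries. Classical solution: a $C^1$ pair satisfying the system pointwise. *)

theory Defs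
  imports "HOL-Analysis.Analysis"
begin

text \<open>Vertices of the graph are the elements of a finite type 'v (so n = CARD('v)).
  Vectors in R^n are real^'v, n x n matrices are real^'v^'v.
  The weighted graph is given by a weight function w; the edge set is
  E = {(i,j). w i j > 0}.\<close>

definition weighted_graph :: "('v::finite \<Rightarrow> 'v \<Rightarrow> real) \<Rightarrow> bool" where
  "weighted_graph w \<longleftrightarrow>
     (\<forall>i j. w i j = w j i) \<and> (\<forall>i j. w i j \<ge> 0) \<and> (\<forall>i. w i i = 0) \<and>
     (\<forall>i j. (i, j) \<in> {(a, b). w a b > 0}\<^sup>*)"

definition skew :: "real^'v^'v \<Rightarrow> bool" where
  "skew m \<longleftrightarrow> (\<forall>i j. m $ i $ j = - (m $ j $ i))"

definition Sinner :: "('v::finite \<Rightarrow> 'v \<Rightarrow> real) \<Rightarrow> real^'v^'v \<Rightarrow> real^'v^'v \<Rightarrow> real" where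
  "Sinner w m m' = (1/2) * (\<Sum>(i, j) \<in> {(a, b). w a b > 0}. m $ i $ j * m' $ i $ j)"

definition ggrad :: "('v::finite \<Rightarrow> 'v \<Rightarrow> real) \<Rightarrow> real^'v \<Rightarrow> real^'v^'v" where
  "ggrad w u = (\<chi> i j. sqrt (w i j) * (u $ i - u $ j))"

definition gdiv :: "('v::finite \<Rightarrow> 'v \<Rightarrow> real) \<Rightarrow> real^'v^'v \<Rightarrow> real^'v" where
  "gdiv w m = (\<chi> i. \<Sum>j \<in> UNIV - {i}. sqrt (w i j) * m $ j $ i)"

definition glap :: "('v::finite \<Rightarrow> 'v \<Rightarrow> real) \<Rightarrow> real^'v \<Rightarrow> real^'v" where
  "glap w u = (\<chi> i. \<Sum>j\<in>UNIV. w i j * (u $ j - u $ i))"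

definition open_cube :: "(real^'v::finite) set" where
  "open_cube = {x. \<forall>i. 0 < x $ i \<and> x $ i < 1}"

definition P0 :: "(real^'v::finite) set" where
  "P0 = {x. (\<forall>i. 0 < x $ i) \<and> (\<Sum>i\<in>UNIV. x $ i) = 1}"

definition dom_HB :: "((real^'v::finite) \<times> (real^'v^'v)) set" where
  "dom_HB = {(x, p). x \<in> open_cube \<and> skew p}"

definition C1_on :: "('a::real_normed_vector \<Rightarrow> 'b::real_normed_vector) \<Rightarrow> 'a set \<Rightarrow> bool" where
  "C1_on f U \<longleftrightarrow> (\<exists>f'. (\<forall>x\<in>U. (f has_derivative f' x) (at x within U)) \<and>
                         (\<forall>h. continuous_on U (\<lambda>x. f' x h)))"

definition classical_solution ::
  "('v::finite \<Rightarrow> 'v \<Rightarrow> real) \<Rightarrow> (real^'v \<Rightarrow> real^'v^'v \<Rightarrow> real^'v) \<Rightarrow>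
   (real^'v \<Rightarrow> real^'v^'v \<Rightarrow> real^'v^'v) \<Rightarrow> (real^'v \<Rightarrow> real^'v) \<Rightarrow> real \<Rightarrow>
   real \<Rightarrow> real \<Rightarrow> real^'v \<Rightarrow> (real \<Rightarrow> real^'v) \<Rightarrow> (real \<Rightarrow> real^'v) \<Rightarrow> bool" where
  "classical_solution w H B g lam t T mu phi rho \<longleftrightarrow>
     (\<exists>phi' rho'.
        (\<forall>s\<in>{t..T}. (phi has_vector_derivative phi' s) (at s within {t..T})) \<and>
        (\<forall>s\<in>{t..T}. (rho has_vector_derivative rho' s) (at s within {t..T})) \<and>
        continuous_on {t..T} phi' \<and> continuous_on {t..T} rho' \<and>
        (\<forall>s\<in>{t..T}. rho s \<in> open_cube) \<and>
        (\<forall>s\<in>{t<..<T}.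
           phi' s = H (rho s) (lam *\<^sub>R ggrad w (phi s)) - glap w (phi s) \<and>
           rho' s = gdiv w (B (rho s) (lam *\<^sub>R ggrad w (phi s))) + glap w (rho s))) \<and>
     phi T = g (rho T) \<and> rho t = mu"

end

theory Submission
  imports Defs
begin

lemma sum_S_UNIV:
  fixes w :: "'v::finite \<Rightarrow> 'v \<Rightarrow> real"
  assumes "\<forall>i j. w i j \<ge> 0"
  shows "(\<Sum>(i, j) \<in> {(a, b). w a b > 0}. f i j * sqrt (w i j)) = (\<Sum>i\<in>UNIV. \<Sum>j\<in>UNIV. f i j * sqrt (w i j))"
proof -
  have "(\<Sum>(i, j) \<in> {(a, b). w a b > 0}. f i j * sqrt (w i j)) = (\<Sum>(i, j) \<in> UNIV \<times> UNIV. f i j * sqrt (w i j))"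
  proof (rule sum.mono_neutral_left)
    show "\<forall>x\<in>UNIV \<times> UNIV - {(a, b). w a b > 0}. (case x of (i, j) \<Rightarrow> f i j * sqrt (w i j)) = 0"
      using assms by (auto simp: not_less) (metis less_eq_real_def)
  qed auto
  also have "\<dots> = (\<Sum>i\<in>UNIV. \<Sum>j\<in>UNIV. f i j * sqrt (w i j))"
    by (simp add: sum.cartesian_product)
  finally show ?thesis .
qed

lemma remove_diag:
  fixes w :: "'v::finite \<Rightarrow> 'v \<Rightarrow> real"
  assumes "w i i = 0"
  shows "(\<Sum>j \<in> UNIV - {i}. sqrt (w i j) * f j) = (\<Sum>j\<in>UNIV. sqrt (w i j) * f j)"
  using sum.remove[of UNIV i "\<lambda>j. sqrt (w i j) * f j"] assms by simp

lemma gdiv_inner: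
  fixes w :: "'v::finite \<Rightarrow> 'v \<Rightarrow> real"
  assumes wg: "weighted_graph w" and sk: "skew m"
  shows "u \<bullet> gdiv w m = - Sinner w m (ggrad w u)"
proof -
  have sym: "\<And>i j. w i j = w j i" and nn: "\<forall>i j. w i j \<ge> 0" and d: "\<And>i. w i i = 0"
    using wg unfolding weighted_graph_def by auto
  have msk: "\<And>i j. m $ i $ j = - m $ j $ i" using sk unfolding skew_def by blast
  define X where "X = (\<Sum>i\<in>UNIV. \<Sum>j\<in>UNIV. m $ i $ j * sqrt (w i j) * u $ i)"
  have "u \<bullet> gdiv w m = (\<Sum>i\<in>UNIV. u $ i * (\<Sum>j\<in>UNIV. sqrt (w i j) * m $ j $ i))"
    unfolding inner_vec_def gdiv_def using remove_diag[of w, OF d] by simp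
  also have "\<dots> = - X" unfolding X_def
    by (simp add: sum_distrib_left sum_negf[symmetric], intro sum.cong refl, metis msk mult.commute mult.left_commute mult_minus_left mult_minus_right)
  finally have 1: "u \<bullet> gdiv w m = - X" .
  have "Sinner w m (ggrad w u) = (1/2) * (\<Sum>i\<in>UNIV. \<Sum>j\<in>UNIV. (m $ i $ j * (u $ i - u $ j)) * sqrt (w i j))"
    unfolding Sinner_def ggrad_def using sum_S_UNIV[OF nn, of "\<lambda>i j. m $ i $ j * (u $ i - u $ j)"]
    by (simp add: algebra_simps)
  also have "(\<Sum>i\<in>UNIV. \<Sum>j\<in>UNIV. (m $ i $ j * (u $ i - u $ j)) * sqrt (w i j))
     = X - (\<Sum>i\<in>UNIV. \<Sum>j\<in>UNIV. m $ i $ j * sqrt (w i j) * u $ j)"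
    unfolding X_def by (simp add: algebra_simps sum_subtractf)
  also have "(\<Sum>i\<in>UNIV. \<Sum>j\<in>UNIV. m $ i $ j * sqrt (w i j) * u $ j)
     = (\<Sum>j\<in>UNIV. \<Sum>i\<in>UNIV. m $ i $ j * sqrt (w i j) * u $ j)"
    by (rule sum.swap)
  also have "\<dots> = (\<Sum>i\<in>UNIV. \<Sum>j\<in>UNIV. - (m $ i $ j * sqrt (w i j) * u $ i))"
    by (intro sum.cong refl) (metis msk sym mult_minus_left)
  also have "\<dots> = - X" unfolding X_def by (simp add: sum_negf)
  finally show ?thesis using 1 by simp
qed

lemma glap_inner:
  fixes w :: "'v::finite \<Rightarrow> 'v \<Rightarrow> real"
  assumes sym: "\<And>i j. w i j = w j i"
  shows "u \<bullet> glap w v = glap w u \<bullet> v"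
proof -
  have "u \<bullet> glap w v = (\<Sum>i\<in>UNIV. \<Sum>j\<in>UNIV. w i j * u $ i * v $ j) - (\<Sum>i\<in>UNIV. \<Sum>j\<in>UNIV. w i j * u $ i * v $ i)"
    unfolding inner_vec_def glap_def by (simp add: sum_distrib_left sum_subtractf algebra_simps)
  moreover have "glap w u \<bullet> v = (\<Sum>i\<in>UNIV. \<Sum>j\<in>UNIV. w i j * u $ j * v $ i) - (\<Sum>i\<in>UNIV. \<Sum>j\<in>UNIV. w i j * u $ i * v $ i)"
    unfolding inner_vec_def glap_def by (simp add: sum_distrib_left sum_distrib_right sum_subtractf algebra_simps)
  moreover have "(\<Sum>i\<in>UNIV. \<Sum>j\<in>UNIV. w i j * u $ j * v $ i) = (\<Sum>j\<in>UNIV. \<Sum>i\<in>UNIV. w i j * u $ j * v $ i)"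
    by (rule sum.swap)
  moreover have "\<dots> = (\<Sum>i\<in>UNIV. \<Sum>j\<in>UNIV. w i j * u $ i * v $ j)"
    by (simp add: sym[of _ "_::'v"])
  ultimately show ?thesis by simp
qed

lemma sum_gdiv:
  fixes w :: "'v::finite \<Rightarrow> 'v \<Rightarrow> real"
  assumes wg: "weighted_graph w" and sk: "skew m"
  shows "(\<Sum>i\<in>UNIV. gdiv w m $ i) = 0"
proof -
  have sym: "\<And>i j. w i j = w j i" and d: "\<And>i. w i i = 0"
    using wg unfolding weighted_graph_def by auto
  have msk: "\<And>i j. m $ i $ j = - m $ j $ i" using sk unfolding skew_def by blast
  define X where "X = (\<Sum>i\<in>UNIV. \<Sum>j\<in>UNIV. sqrt (w i j) * m $ j $ i)"
  have 1: "(\<Sum>i\<in>UNIV. gdiv w m $ i) = X"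
    unfolding X_def gdiv_def using remove_diag[of w, OF d] by simp
  have "X = (\<Sum>j\<in>UNIV. \<Sum>i\<in>UNIV. sqrt (w i j) * m $ j $ i)" unfolding X_def by (rule sum.swap)
  also have "\<dots> = (\<Sum>i\<in>UNIV. \<Sum>j\<in>UNIV. - (sqrt (w i j) * m $ j $ i))"
    by (intro sum.cong refl) (metis msk sym mult_minus_right)
  also have "\<dots> = - X" unfolding X_def by (simp add: sum_negf)
  finally show ?thesis using 1 by simp
qed

lemma sum_glap:
  fixes w :: "'v::finite \<Rightarrow> 'v \<Rightarrow> real"
  assumes sym: "\<And>i j. w i j = w j i"
  shows "(\<Sum>i\<in>UNIV. glap w u $ i) = 0"
proof -
  have "(\<Sum>i\<in>UNIV. glap w u $ i) = (\<Sum>i\<in>UNIV. \<Sum>j\<in>UNIV. w i j * u $ j) - (\<Sum>i\<in>UNIV. \<Sum>j\<in>UNIV. w i j * u $ i)"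
    unfolding glap_def by (simp add: sum_subtractf algebra_simps)
  moreover have "(\<Sum>i\<in>UNIV. \<Sum>j\<in>UNIV. w i j * u $ j) = (\<Sum>j\<in>UNIV. \<Sum>i\<in>UNIV. w i j * u $ j)"
    by (rule sum.swap)
  moreover have "\<dots> = (\<Sum>i\<in>UNIV. \<Sum>j\<in>UNIV. w i j * u $ i)"
    by (simp add: sym[of _ "_::'v"])
  ultimately show ?thesis by simp
qed

lemma skew_ggrad:
  fixes w :: "'v::finite \<Rightarrow> 'v \<Rightarrow> real"
  assumes sym: "\<And>i j. w i j = w j i"
  shows "skew (lam *\<^sub>R ggrad w u)"
  unfolding skew_def ggrad_def by (simp add: sym[of _ "_::'v"] algebra_simps)

lemma Sinner_scale:
  "Sinner w m (c *\<^sub>R p) = c * Sinner w m p"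
  unfolding Sinner_def by (simp add: sum_distrib_left algebra_simps case_prod_beta)

lemma mvt_bound:
  fixes F :: "real \<Rightarrow> real"
  assumes "a \<le> b" and D: "\<forall>s\<in>{a..b}. (F has_real_derivative F' s) (at s within {a..b})"
    and K: "\<forall>s\<in>{a<..<b}. F' s \<le> K"
  shows "F b - F a \<le> K * (b - a)"
proof (cases "a = b")
  case True then show ?thesis by simp
next
  case False
  then have ab: "a < b" using assms by simp
  have cont: "continuous_on {a..b} F"
    using D by (meson DERIV_continuous continuous_on_eq_continuous_within)
  have Dat: "(F has_real_derivative F' x) (at x)" if "a < x" "x < b" for x
  proof -
    have "x \<in> interior {a..b}" using that by simp
    moreover have "(F has_real_derivative F' x) (at x within {a..b})" using D that by auto
    ultimately show ?thesis using at_within_interior[of x "{a..b}"] by simp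
  qed
  obtain l z where z: "a < z" "z < b" "(F has_real_derivative l) (at z)" "F b - F a = (b - a) * l"
    using MVT[OF ab cont] Dat real_differentiable_def by meson
  have "l = F' z" using DERIV_unique z(3) Dat[OF z(1,2)] by blast
  then have "l \<le> K" using K z by auto
  then show ?thesis using z(4) ab by (simp add: mult.commute mult_right_mono)
qed


theorem lemma3p1:
  fixes w :: "'v::finite \<Rightarrow> 'v \<Rightarrow> real"
    and H :: "real^'v \<Rightarrow> real^'v^'v \<Rightarrow> real^'v"
    and B :: "real^'v \<Rightarrow> real^'v^'v \<Rightarrow> real^'v^'v"
    and g :: "real^'v \<Rightarrow> real^'v"
    and T C1 lam t :: real
    and mu :: "real^'v"
    and phi rho :: "real \<Rightarrow> real^'v"
  assumes "weighted_graph w"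
    and "T > 0" and "C1 > 0"
    and "C1_on (\<lambda>(x, p). H x p) dom_HB"
    and "C1_on (\<lambda>(x, p). B x p) dom_HB"
    and "\<forall>(x, p) \<in> dom_HB. skew (B x p)"
    and "\<forall>(x, p) \<in> dom_HB. Sinner w (B x p) p \<ge> H x p \<bullet> x - C1"
    and "\<forall>(x, p) \<in> dom_HB. \<forall>i. H x p $ i \<ge> - C1"
    and "0 \<le> lam" and "lam \<le> 1"
    and "0 \<le> t" and "t < T"
    and "mu \<in> P0"
    and "classical_solution w H B g lam t T mu phi rho"
  shows "lam * (phi T \<bullet> rho T) \<le> lam * (phi t \<bullet> mu) + 2 * C1 * (T - t)"
proof -
  note wg = assms(1)
  have sym: "\<And>i j. w i j = w j i" using wg unfolding weighted_graph_def by auto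
  obtain phi' rho' where
    dphi: "\<forall>s\<in>{t..T}. (phi has_vector_derivative phi' s) (at s within {t..T})" and
    drho: "\<forall>s\<in>{t..T}. (rho has_vector_derivative rho' s) (at s within {t..T})" and
    cube: "\<forall>s\<in>{t..T}. rho s \<in> open_cube" and
    eqs: "\<forall>s\<in>{t<..<T}.
           phi' s = H (rho s) (lam *\<^sub>R ggrad w (phi s)) - glap w (phi s) \<and>
           rho' s = gdiv w (B (rho s) (lam *\<^sub>R ggrad w (phi s))) + glap w (rho s)" and
    rhot: "rho t = mu"
    using assms(14) unfolding classical_solution_def by blast
  define one :: "real^'v" where "one = (\<chi> i. 1)"
  have sum_one: "\<And>x. x \<bullet> one = (\<Sum>i\<in>UNIV. x $ i)" unfolding one_def inner_vec_def by simp
  have dom: "(rho s, lam *\<^sub>R ggrad w (phi s)) \<in> dom_HB" if "s \<in> {t<..<T}" for s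
    using cube that skew_ggrad[OF sym] unfolding dom_HB_def by auto
  have rho'0: "rho' s \<bullet> one = 0" if "s \<in> {t<..<T}" for s
  proof -
    have "skew (B (rho s) (lam *\<^sub>R ggrad w (phi s)))" using assms(6) dom[OF that] by auto
    then show ?thesis using eqs that sum_gdiv[OF wg] sum_glap[of w, OF sym]
      by (simp add: sum_one inner_add_left sum.distrib)
  qed
  have mass: "rho s \<bullet> one = 1" if "s \<in> {t..T}" for s
  proof -
    have Dm: "\<forall>x\<in>{t..s}. ((\<lambda>x. rho x \<bullet> one) has_real_derivative (rho' x \<bullet> one)) (at x within {t..s})"
    proof
      fix x assume x: "x \<in> {t..s}"
      then have "(rho has_derivative (\<lambda>h. h *\<^sub>R rho' x)) (at x within {t..T})"
        using drho that x unfolding has_vector_derivative_def by auto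
      then have "(rho has_derivative (\<lambda>h. h *\<^sub>R rho' x)) (at x within {t..s})"
        by (rule has_derivative_subset) (use that in auto)
      from has_derivative_inner_left[OF this, of one]
      show "((\<lambda>x. rho x \<bullet> one) has_real_derivative (rho' x \<bullet> one)) (at x within {t..s})"
        unfolding has_field_derivative_def by (rule has_derivative_eq_rhs) (auto simp: mult.commute)
    qed
    have Dm2: "\<forall>x\<in>{t..s}. ((\<lambda>x. - (rho x \<bullet> one)) has_real_derivative (- (rho' x \<bullet> one))) (at x within {t..s})"
      using Dm DERIV_minus by blast
    have K: "\<forall>x\<in>{t<..<s}. rho' x \<bullet> one \<le> 0" using rho'0 that by auto
    have K2: "\<forall>x\<in>{t<..<s}. - (rho' x \<bullet> one) \<le> 0" using rho'0 that by auto
    have "rho s \<bullet> one - rho t \<bullet> one \<le> 0"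
      using mvt_bound[OF _ Dm K] that by simp
    moreover have "- (rho s \<bullet> one) - - (rho t \<bullet> one) \<le> 0"
      using mvt_bound[OF _ Dm2 K2] that by simp
    moreover have "rho t \<bullet> one = 1" using rhot assms(13) unfolding P0_def sum_one by simp
    ultimately show ?thesis by linarith
  qed
  define F' where "F' s = lam * (phi s \<bullet> rho' s + phi' s \<bullet> rho s)" for s
  have DF: "\<forall>s\<in>{t..T}. ((\<lambda>s. lam * (phi s \<bullet> rho s)) has_real_derivative F' s) (at s within {t..T})"
  proof
    fix s assume s: "s \<in> {t..T}"
    have a: "(phi has_derivative (\<lambda>h. h *\<^sub>R phi' s)) (at s within {t..T})"
      using dphi s unfolding has_vector_derivative_def by auto
    have b: "(rho has_derivative (\<lambda>h. h *\<^sub>R rho' s)) (at s within {t..T})"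
      using drho s unfolding has_vector_derivative_def by auto
    have "((\<lambda>s. lam * (phi s \<bullet> rho s)) has_derivative
       (\<lambda>h. lam * (phi s \<bullet> (h *\<^sub>R rho' s) + (h *\<^sub>R phi' s) \<bullet> rho s))) (at s within {t..T})"
      by (intro has_derivative_mult_right has_derivative_inner a b)
    then show "((\<lambda>s. lam * (phi s \<bullet> rho s)) has_real_derivative F' s) (at s within {t..T})"
      unfolding has_field_derivative_def F'_def
      by (rule has_derivative_eq_rhs) (auto simp: algebra_simps)
  qed
  have KF: "\<forall>s\<in>{t<..<T}. F' s \<le> 2 * C1"
  proof
    fix s assume s: "s \<in> {t<..<T}"
    define p where "p = lam *\<^sub>R ggrad w (phi s)"
    define r where "r = rho s"
    have dm: "(r, p) \<in> dom_HB" using dom[OF s] unfolding p_def r_def .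
    have skB: "skew (B r p)" using assms(6) dm by auto
    have ineq: "Sinner w (B r p) p \<ge> H r p \<bullet> r - C1" using assms(7) dm by auto
    have Hb: "\<And>i. H r p $ i \<ge> - C1" using assms(8) dm by auto
    have rpos: "\<And>i. r $ i > 0" using cube s unfolding r_def open_cube_def by auto
    have rsum: "(\<Sum>i\<in>UNIV. r $ i) = 1" using mass[of s] s unfolding r_def sum_one by auto
    have "H r p \<bullet> r = (\<Sum>i\<in>UNIV. H r p $ i * r $ i)" by (simp add: inner_vec_def)
    also have "\<dots> \<ge> (\<Sum>i\<in>UNIV. - C1 * r $ i)"
      by (rule sum_mono) (metis Hb rpos less_imp_le mult_right_mono)
    finally have Hr: "H r p \<bullet> r \<ge> - C1" using rsum by (simp add: sum_negf sum_distrib_left[symmetric])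
    have "phi s \<bullet> rho' s + phi' s \<bullet> rho s = H r p \<bullet> r - Sinner w (B r p) (ggrad w (phi s))"
      using eqs s gdiv_inner[OF wg skB, of "phi s"] glap_inner[of w, OF sym, of "phi s" r]
      unfolding p_def r_def by (simp add: inner_add_right inner_diff_left)
    then have "F' s = lam * (H r p \<bullet> r - Sinner w (B r p) (ggrad w (phi s)))"
      unfolding F'_def by simp
    also have "\<dots> = lam * (H r p \<bullet> r) - Sinner w (B r p) p"
      unfolding p_def Sinner_scale by (simp add: right_diff_distrib)
    also have "\<dots> \<le> lam * (H r p \<bullet> r) - (H r p \<bullet> r - C1)" using ineq by simp
    also have "\<dots> = C1 - (1 - lam) * (H r p \<bullet> r)" by (simp add: algebra_simps)
    also have "\<dots> \<le> C1 + (1 - lam) * C1"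
      using Hr assms(10) mult_left_mono[of "- C1" "H r p \<bullet> r" "1 - lam"] by simp
    also have "\<dots> \<le> 2 * C1" using assms(3,9) by (simp add: algebra_simps)
    finally show "F' s \<le> 2 * C1" .
  qed
  show ?thesis using mvt_bound[OF _ DF KF] assms(12) rhot by simp
qed

end
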